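(* Let $d=(d_1,\dots,d_n)$ (with $n\ge 1$) be a degree sequence and $\overline d=(\overline d_1,\dots,\overline d_n)=(n-1-d_n,\dots,n-1-d_1)$ its complementary sequence. Then $n\le m(d)+m(\overline d)\le n+1$. Moreover $m(d)+m(\overline d)=n+1$ if and only if $d_{m(d)}=m(d)-1$.
   Context: Degree sequences (of finite simple graphs, terms may be $0$) are listed in nonincreasing order. For such a sequence $d$, $m(d)=\max\{i : d_i\ge i-1\}$. *)

theory Defs
  imports Main
begin

text \<open>Sequences are lists; the paper's d_i (1-based) is d ! (i-1).
  A degree sequence: nonincreasing and realized by a finite simple graph
  on vertex set {0..<n}, vertex i having degree d ! i.\<close>

definition nonincreasing :: "nat list \<Rightarrow> bool" where
  "nonincreasing d \<longleftrightarrow> (\<forall>i j. i \<le> j \<longrightarrow> j < length d \<longrightarrow> d ! j \<le> d ! i)"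

definition graphic :: "nat list \<Rightarrow> bool" where
  "graphic d \<longleftrightarrow> (\<exists>E :: nat \<Rightarrow> nat \<Rightarrow> bool.
      (\<forall>i j. E i j \<longrightarrow> E j i) \<and> (\<forall>i. \<not> E i i) \<and>
      (\<forall>i < length d. d ! i = card {j. j < length d \<and> E i j}))"

definition degree_sequence :: "nat list \<Rightarrow> bool" where
  "degree_sequence d \<longleftrightarrow> nonincreasing d \<and> graphic d"

definition mval :: "nat list \<Rightarrow> nat" where
  "mval d = Max {i. 1 \<le> i \<and> i \<le> length d \<and> d ! (i - 1) \<ge> i - 1}"

definition compl_seq :: "nat list \<Rightarrow> nat list" where
  "compl_seq d = rev (map (\<lambda>x. length d - 1 - x) d)"

end

theory Submission
  imports Defs
begin

lemma deg_bound:
  assumes "graphic d" "i < length d"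
  shows "d ! i \<le> length d - 1"
proof -
  obtain E where E: "\<forall>i. \<not> E i i" "\<forall>i < length d. d ! i = card {j. j < length d \<and> E i j}"
    using assms(1) unfolding graphic_def by blast
  have "{j. j < length d \<and> E i j} \<subseteq> {0..<length d} - {i}" using E(1) by auto
  hence "card {j. j < length d \<and> E i j} \<le> card ({0..<length d} - {i})"
    by (intro card_mono) auto
  also have "\<dots> = length d - 1" using assms(2) by simp
  finally show ?thesis using E(2) assms(2) by simp
qed

theorem lemma5:
  fixes d :: "nat list"
  assumes "length d \<ge> 1" and "degree_sequence d"
  shows "length d \<le> mval d + mval (compl_seq d)
       \<and> mval d + mval (compl_seq d) \<le> length d + 1
       \<and> (mval d + mval (compl_seq d) = length d + 1 \<longleftrightarrow> d ! (mval d - 1) = mval d - 1)"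
proof -
  define n where "n = length d"
  have B: "\<And>i. i < n \<Longrightarrow> d ! i \<le> n - 1"
    using assms(2) deg_bound unfolding degree_sequence_def n_def by blast
  have M: "\<And>i j. i \<le> j \<Longrightarrow> j < n \<Longrightarrow> d ! j \<le> d ! i"
    using assms(2) unfolding degree_sequence_def nonincreasing_def n_def by blast
  define S where "S = {i. 1 \<le> i \<and> i \<le> n \<and> d ! (i - 1) \<ge> i - 1}"
  define m where "m = Max S"
  have mv: "mval d = m" unfolding m_def S_def mval_def n_def by simp
  have finS: "finite S" unfolding S_def by auto
  have "1 \<in> S" unfolding S_def using assms(1) n_def by auto
  hence "m \<in> S" using finS m_def Max_in by blast
  hence m1: "1 \<le> m" "m \<le> n" "d ! (m - 1) \<ge> m - 1" unfolding S_def by auto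
  have mmax: "\<And>i. i \<in> S \<Longrightarrow> i \<le> m" using finS m_def by simp
  have cl: "length (compl_seq d) = n" unfolding compl_seq_def n_def by simp
  have cn: "\<And>i. 1 \<le> i \<Longrightarrow> i \<le> n \<Longrightarrow> compl_seq d ! (i - 1) = n - 1 - d ! (n - i)"
    unfolding compl_seq_def n_def by (simp add: rev_nth)
  define T where "T = {i. 1 \<le> i \<and> i \<le> n \<and> n - 1 - d ! (n - i) \<ge> i - 1}"
  have mvb: "mval (compl_seq d) = Max T"
    unfolding mval_def cl T_def
    by (rule arg_cong[where f=Max]) (metis (no_types, lifting) cn)
  have Tc: "\<And>i. 1 \<le> i \<Longrightarrow> i \<le> n \<Longrightarrow> i \<in> T \<longleftrightarrow> d ! (n - i) \<le> n - i"
  proof -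
    fix i assume i: "1 \<le> i" "i \<le> n"
    have "d ! (n - i) \<le> n - 1" using B i by simp
    thus "i \<in> T \<longleftrightarrow> d ! (n - i) \<le> n - i" unfolding T_def using i by auto
  qed
  have finT: "finite T" unfolding T_def by auto
  show ?thesis
  proof (cases "d ! (m - 1) = m - 1")
    case True
    have inT: "n + 1 - m \<in> T" using Tc[of "n+1-m"] m1 True
      by (simp add: Suc_diff_le)
    have up: "\<And>i. i \<in> T \<Longrightarrow> i \<le> n + 1 - m"
    proof (rule ccontr)
      fix i assume iT: "i \<in> T" and "\<not> i \<le> n + 1 - m"
      hence i: "1 \<le> i" "i \<le> n" "n - i < m - 1" using m1 unfolding T_def by auto
      have "d ! (n - i) \<le> n - i" using Tc i iT by blast
      moreover have "d ! (m - 1) \<le> d ! (n - i)" using M[of "n-i" "m-1"] i m1 by simp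
      ultimately show False using True i by simp
    qed
    have "Max T = n + 1 - m" using inT up finT by (meson Max_eqI)
    thus ?thesis using mv mvb m1 True n_def by simp
  next
    case False
    hence gt: "d ! (m - 1) \<ge> m" using m1 by simp
    have "m < n"
    proof (rule ccontr)
      assume "\<not> m < n" hence "m = n" using m1 by simp
      thus False using B[of "m-1"] gt m1 by simp
    qed
    have "m + 1 \<notin> S" using mmax by fastforce
    hence dm: "d ! m < m" using \<open>m < n\<close> unfolding S_def by auto
    have inT: "n - m \<in> T" using Tc[of "n-m"] \<open>m < n\<close> dm by simp
    have up: "\<And>i. i \<in> T \<Longrightarrow> i \<le> n - m"
    proof (rule ccontr)
      fix i assume iT: "i \<in> T" and "\<not> i \<le> n - m"
      hence i: "1 \<le> i" "i \<le> n" "n - i \<le> m - 1" using m1 unfolding T_def by auto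
      have "d ! (n - i) \<le> n - i" using Tc i iT by blast
      moreover have "d ! (m - 1) \<le> d ! (n - i)" using M[of "n-i" "m-1"] i m1 by simp
      ultimately show False using gt i m1 by linarith
    qed
    have "Max T = n - m" using inT up finT by (meson Max_eqI)
    thus ?thesis using mv mvb m1 False \<open>m < n\<close> n_def by simp
  qed
qed

end
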